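(* $G(x)=\{u\in L : (u,u)=2\}$.
   Context: $\mathbb F$ is a field of characteristic zero and $\mathfrak{sl}_2$ is the Lie algebra of $2\times2$ trace-zero matrices over $\mathbb F$, with trace form $(u,v)=\mathrm{tr}(uv)$. The equitable basis is $x=\begin{pmatrix}1&0\\0&-1\end{pmatrix}$, $y=\begin{pmatrix}-1&2\\0&1\end{pmatrix}$, $z=\begin{pmatrix}-1&0\\-2&1\end{pmatrix}$. Let $x^*=\begin{pmatrix}1&-1\\1&-1\end{pmatrix}$, $y^*=\begin{pmatrix}0&0\\1&0\end{pmatrix}$, $z^*=\begin{pmatrix}0&-1\\0&0\end{pmatrix}$ (these are nilpotent). $G$ is the subgroup of $\mathrm{Aut}_{\mathbb F}(\mathfrak{sl}_2)$ generated by $\exp(\mathrm{ad}\,x^* )$, $\exp(\mathrm{ad}\,y^* )$ and $\exp(\mathrm{ad}\,z^* )$. $G(x)$ is the $G$-orbit of $x$. $L=\mathbb Zx\oplus\mathbb Zy\oplus\mathbb Zz$. *)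

theory Defs
  imports Main
begin

text \<open>2x2 matrices over a field; M2 a b c d is the matrix with rows (a b) and (c d).\<close>
datatype 'a mat2 = M2 'a 'a 'a 'a

fun mmul :: "'a::field mat2 \<Rightarrow> 'a mat2 \<Rightarrow> 'a mat2" where
  "mmul (M2 a b c d) (M2 e f g h) = M2 (a*e+b*g) (a*f+b*h) (c*e+d*g) (c*f+d*h)"

fun madd :: "'a::field mat2 \<Rightarrow> 'a mat2 \<Rightarrow> 'a mat2" where
  "madd (M2 a b c d) (M2 e f g h) = M2 (a+e) (b+f) (c+g) (d+h)"

fun msub :: "'a::field mat2 \<Rightarrow> 'a mat2 \<Rightarrow> 'a mat2" where
  "msub (M2 a b c d) (M2 e f g h) = M2 (a-e) (b-f) (c-g) (d-h)"

fun msmult :: "'a::field \<Rightarrow> 'a mat2 \<Rightarrow> 'a mat2" where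
  "msmult k (M2 a b c d) = M2 (k*a) (k*b) (k*c) (k*d)"

fun mtr :: "'a::field mat2 \<Rightarrow> 'a" where
  "mtr (M2 a b c d) = a + d"

definition sl2 :: "'a::field mat2 set" where
  "sl2 = {u. mtr u = 0}"

definition trform :: "'a::field mat2 \<Rightarrow> 'a mat2 \<Rightarrow> 'a" where
  "trform u v = mtr (mmul u v)"

definition ad :: "'a::field mat2 \<Rightarrow> 'a mat2 \<Rightarrow> 'a mat2" where
  "ad n u = msub (mmul n u) (mmul u n)"

text \<open>Exponential of the nilpotent operator ad n (n nilpotent in sl2, so (ad n)^3 = 0):
  exp(ad n) = sum over k<3 of (ad n)^k / k!.\<close>
definition exp_ad :: "'a::field mat2 \<Rightarrow> 'a mat2 \<Rightarrow> 'a mat2" where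
  "exp_ad n u = madd u (madd (ad n u) (msmult (1/2) ((ad n ^^ 2) u)))"

definition ex :: "'a::field mat2" where "ex = M2 1 0 0 (-1)"
definition ey :: "'a::field mat2" where "ey = M2 (-1) 2 0 1"
definition ez :: "'a::field mat2" where "ez = M2 (-1) 0 (-2) 1"
definition xs :: "'a::field mat2" where "xs = M2 1 (-1) 1 (-1)"
definition ys :: "'a::field mat2" where "ys = M2 0 0 1 0"
definition zs :: "'a::field mat2" where "zs = M2 0 (-1) 0 0"

text \<open>The group G generated (under composition) by exp(ad x*), exp(ad y*), exp(ad z*);
  these are bijections, so inverses are the function inverses.\<close>
inductive_set Ggrp :: "('a::field mat2 \<Rightarrow> 'a mat2) set" where
  gen_x: "exp_ad xs \<in> Ggrp"
| gen_y: "exp_ad ys \<in> Ggrp"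
| gen_z: "exp_ad zs \<in> Ggrp"
| ident: "id \<in> Ggrp"
| comp: "f \<in> Ggrp \<Longrightarrow> g \<in> Ggrp \<Longrightarrow> f \<circ> g \<in> Ggrp"
| inverse: "f \<in> Ggrp \<Longrightarrow> inv f \<in> Ggrp"

definition Lat :: "'a::field mat2 set" where
  "Lat = {madd (msmult (of_int a) ex) (madd (msmult (of_int b) ey) (msmult (of_int c) ez))
          | a b c :: int. True}"

end

theory Submission imports Defs begin

definition conjm :: "int \<Rightarrow> int \<Rightarrow> int \<Rightarrow> int \<Rightarrow> 'a::field_char_0 mat2 \<Rightarrow> 'a mat2" where
  "conjm a b c d u = mmul (mmul (M2 (of_int a) (of_int b) (of_int c) (of_int d)) u)
       (M2 (of_int d) (of_int (-b)) (of_int (-c)) (of_int a))"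

definition isconj :: "('a::field_char_0 mat2 \<Rightarrow> 'a mat2) \<Rightarrow> bool" where
  "isconj f = (\<exists>a b c d. a*d - b*c = 1 \<and> f = conjm a b c d)"

lemma conjm_comp: "conjm a b c d \<circ> conjm a' b' c' d' =
   (conjm (a*a'+b*c') (a*b'+b*d') (c*a'+d*c') (c*b'+d*d') :: 'a::field_char_0 mat2 \<Rightarrow> _)"
proof
  fix u :: "'a mat2" show "(conjm a b c d \<circ> conjm a' b' c' d') u = conjm (a*a'+b*c') (a*b'+b*d') (c*a'+d*c') (c*b'+d*d') u"
    by (cases u) (simp add: conjm_def algebra_simps)
qed

lemma conjm_inv_cancel:
  assumes "a*d - b*c = 1"
  shows "conjm d (-b) (-c) a (conjm a b c d u) = (u :: 'a::field_char_0 mat2)"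
proof -
  have h: "of_int a * of_int d - of_int b * of_int c = (1::'a)"
    using arg_cong[OF assms, of "of_int :: int \<Rightarrow> 'a"] by simp
  obtain p q r s where u: "u = M2 p q r s" by (cases u)
  show ?thesis using h unfolding u conjm_def by simp algebra
qed

lemma isconj_inv: assumes "isconj f" shows "isconj (inv f)"
proof -
  obtain a b c d where d: "a*d - b*c = 1" and f: "f = conjm a b c d" using assms isconj_def by blast
  have d2: "d*a - (-b)*(-c) = 1" using d by (simp add: algebra_simps)
  have "inv f = conjm d (-b) (-c) a"
    apply (rule inv_equality)
    unfolding f using conjm_inv_cancel[OF d] conjm_inv_cancel[OF d2] by simp_all
  thus ?thesis using d2 isconj_def by blast
qed

lemma isconj_bij: "isconj f \<Longrightarrow> inj f"
  unfolding isconj_def using conjm_inv_cancel by (metis injI)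

lemma Ggrp_isconj: "f \<in> Ggrp \<Longrightarrow> isconj (f :: 'a::field_char_0 mat2 \<Rightarrow> _)"
proof (induction rule: Ggrp.induct)
  case gen_x
  have "exp_ad xs = (conjm 2 (-1) 1 0 :: 'a mat2 \<Rightarrow> _)"
  proof fix u :: "'a mat2" show "exp_ad xs u = conjm 2 (-1) 1 0 u"
      by (cases u) (simp add: exp_ad_def xs_def conjm_def ad_def numeral_2_eq_2 field_simps)
  qed
  then show ?case unfolding isconj_def by (intro exI[of _ 2] exI[of _ "-1"] exI[of _ 1] exI[of _ 0]) simp
next
  case gen_y
  have "exp_ad ys = (conjm 1 0 1 1 :: 'a mat2 \<Rightarrow> _)"
  proof fix u :: "'a mat2" show "exp_ad ys u = conjm 1 0 1 1 u"
      by (cases u) (simp add: exp_ad_def ys_def conjm_def ad_def numeral_2_eq_2 field_simps)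
  qed
  then show ?case unfolding isconj_def by (intro exI[of _ 1] exI[of _ 0] exI[of _ 1] exI[of _ 1]) simp
next
  case gen_z
  have "exp_ad zs = (conjm 1 (-1) 0 1 :: 'a mat2 \<Rightarrow> _)"
  proof fix u :: "'a mat2" show "exp_ad zs u = conjm 1 (-1) 0 1 u"
      by (cases u) (simp add: exp_ad_def zs_def conjm_def ad_def numeral_2_eq_2 field_simps)
  qed
  then show ?case unfolding isconj_def by (intro exI[of _ 1] exI[of _ "-1"] exI[of _ 0] exI[of _ 1]) simp
next
  case ident
  have "id = (conjm 1 0 0 1 :: 'a mat2 \<Rightarrow> _)"
  proof fix u :: "'a mat2" show "id u = conjm 1 0 0 1 u"
      by (cases u) (simp add: conjm_def)
  qed
  then show ?case unfolding isconj_def by (intro exI[of _ 1] exI[of _ 0] exI[of _ 0] exI[of _ 1]) simp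
next
  case (comp f g)
  obtain a b c d where d: "a*d - b*c = 1" and f: "f = conjm a b c d" using comp isconj_def by blast
  obtain a' b' c' d' where d': "a'*d' - b'*c' = 1" and g: "g = conjm a' b' c' d'" using comp isconj_def by blast
  have "(a*a'+b*c')*(c*b'+d*d') - (a*b'+b*d')*(c*a'+d*c') = (a*d-b*c)*(a'*d'-b'*c')"
    by (simp add: algebra_simps)
  then show ?case unfolding isconj_def f g conjm_comp using d d' by auto
next
  case (inverse f)
  then show ?case using isconj_inv by blast
qed

lemma conj_ex:
  assumes "a*d - b*c = 1"
  shows "conjm a b c d (ex :: 'a::field_char_0 mat2) \<in> Lat \<and> trform (conjm a b c d ex) (conjm a b c d ex) = (2::'a)"
proof -
  have h: "of_int a * of_int d - of_int b * of_int c = (1::'a)"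
    using arg_cong[OF assms, of "of_int :: int \<Rightarrow> 'a"] by simp
  have "conjm a b c d (ex :: 'a mat2) = madd (msmult (of_int (a*d+b*c - a*b - c*d)) ex)
     (madd (msmult (of_int (-a*b)) ey) (msmult (of_int (-c*d)) ez))"
    by (simp add: conjm_def ex_def ey_def ez_def algebra_simps)
  hence "conjm a b c d (ex :: 'a mat2) \<in> Lat" unfolding Lat_def by blast
  moreover have "trform (conjm a b c d ex) (conjm a b c d ex) = (2::'a)"
    using h by (simp add: conjm_def ex_def trform_def) algebra
  ultimately show ?thesis by blast
qed

definition mm :: "int \<Rightarrow> int \<Rightarrow> int \<Rightarrow> 'a::field_char_0 mat2" where
 "mm p b c = M2 (of_int p) (of_int (2*b)) (of_int (2*c)) (of_int (-p))"
lemma fz: "exp_ad zs (mm p b c) = (mm (p - 2*c) (b+p-c) c :: 'a::field_char_0 mat2)"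
  by (simp add: exp_ad_def zs_def mm_def ad_def numeral_2_eq_2 field_simps)
lemma fy: "exp_ad ys (mm p b c) = (mm (p - 2*b) b (c+p-b) :: 'a::field_char_0 mat2)"
  by (simp add: exp_ad_def ys_def mm_def ad_def numeral_2_eq_2 field_simps)

lemma ab: fixes p b c :: int assumes e: "p^2 + 4*b*c = 1" and cb: "\<bar>c\<bar> \<le> \<bar>b\<bar>" and b0: "b \<noteq> 0" and pb: "p*b > 0"
  shows "\<bar>b - p - c\<bar> < \<bar>b\<bar>"
proof -
  have e': "p^2 = 1 - 4*(b*c)" using e by (simp add: algebra_simps)
  have p0: "p \<noteq> 0" using pb by auto
  have "1 \<le> \<bar>p\<bar>" using p0 by linarith
  hence "p^2 \<ge> 1" using abs_le_square_iff[of 1 p] by simp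
  hence bc: "b*c \<le> 0" using e' by linarith
  have "c^2 \<le> \<bar>b\<bar>*\<bar>c\<bar>" proof -
    have "c^2 = \<bar>c\<bar>*\<bar>c\<bar>" by (simp add: power2_eq_square)
    also have "\<dots> \<le> \<bar>b\<bar>*\<bar>c\<bar>" by (rule mult_right_mono) (use cb in auto)
    finally show ?thesis .
  qed
  moreover have bcabs: "\<bar>b\<bar>*\<bar>c\<bar> = - (b*c)" using bc by (simp add: abs_mult[symmetric] abs_of_nonpos)
  ultimately have "c^2 < p^2" using e' zero_le_power2[of c] by linarith
  hence cp: "\<bar>c\<bar> < \<bar>p\<bar>" using abs_le_square_iff[of p c] by linarith
  have "1 \<le> \<bar>b\<bar>" using b0 by linarith
  hence "b^2 \<ge> 1" using abs_le_square_iff[of 1 b] by simp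
  moreover have "(2*\<bar>b\<bar> + \<bar>c\<bar>)^2 = 4*b^2 + 4*(\<bar>b\<bar>*\<bar>c\<bar>) + c^2"
    by (simp add: power2_eq_square algebra_simps)
  ultimately have "p^2 < (2*\<bar>b\<bar> + \<bar>c\<bar>)^2" using e' bcabs zero_le_power2[of c] by linarith
  hence pp: "\<bar>p\<bar> < 2*\<bar>b\<bar> + \<bar>c\<bar>"
    using abs_le_square_iff[of "2*\<bar>b\<bar> + \<bar>c\<bar>" p] by simp
  have "(p > 0 \<and> b > 0) \<or> (p < 0 \<and> b < 0)" using pb by (simp add: zero_less_mult_iff)
  then show ?thesis
  proof
    assume h: "p > 0 \<and> b > 0"
    hence "c \<le> 0" using bc by (simp add: mult_le_0_iff)
    thus ?thesis using h cp pp by linarith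
  next
    assume h: "p < 0 \<and> b < 0"
    hence "c \<ge> 0" using bc by (simp add: mult_le_0_iff)
    thus ?thesis using h cp pp by linarith
  qed
qed

definition SS :: "'a::field_char_0 mat2 set" where "SS = (\<lambda>g. g ex) ` Ggrp"

lemma SS_closed: "v \<in> SS \<Longrightarrow> f \<in> Ggrp \<Longrightarrow> f v \<in> SS"
proof -
  assume "v \<in> SS" "f \<in> Ggrp"
  then obtain g where g: "g \<in> Ggrp" "v = g ex" unfolding SS_def by auto
  have "f v = (f \<circ> g) ex" using g by simp
  thus ?thesis unfolding SS_def using Ggrp.comp[OF \<open>f \<in> Ggrp\<close> g(1)] by blast
qed

lemma SS_back: assumes "f \<in> Ggrp" "f u \<in> SS" shows "u \<in> SS"
proof -
  have "inj f" using Ggrp_isconj[OF assms(1)] isconj_bij by blast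
  obtain g where g: "g \<in> Ggrp" "f u = g ex" using assms(2) SS_def by auto
  have "u = (inv f \<circ> g) ex" using g \<open>inj f\<close> by (metis comp_apply inv_f_f)
  thus ?thesis unfolding SS_def using Ggrp.comp Ggrp.inverse assms(1) g(1) by blast
qed

lemma descent: "nat \<bar>b\<bar> + nat \<bar>c\<bar> = n \<Longrightarrow> p^2 + 4*b*c = 1 \<Longrightarrow> (mm p b c :: 'a::field_char_0 mat2) \<in> SS"
proof (induction n arbitrary: p b c rule: less_induct)
  case (less n)
  have p0: "p \<noteq> 0"
  proof
    assume "p = 0" hence "4*(b*c) = 1" using less.prems(2) by (simp add: algebra_simps)
    thus False by presburger
  qed
  show ?case
  proof (cases "b = 0 \<and> c = 0")
    case True
    hence "p^2 = 1" using less.prems(2) by simp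
    hence "p = 1 \<or> p = -1" by (simp add: power2_eq_1_iff)
    thus ?thesis
    proof
      assume "p = 1"
      hence "mm p b c = (ex :: 'a mat2)" using True by (simp add: mm_def ex_def)
      thus ?thesis unfolding SS_def using image_eqI[of _ "\<lambda>g. g ex" id, OF _ Ggrp.ident] by simp
    next
      assume "p = -1"
      have ex1: "(ex :: 'a mat2) = mm 1 0 0" by (simp add: mm_def ex_def)
      have "exp_ad zs (exp_ad ys (exp_ad zs (ex :: 'a mat2))) = mm p b c"
        unfolding ex1 fz fy using True \<open>p = -1\<close> by simp
      moreover have "(ex :: 'a mat2) \<in> SS" unfolding SS_def using image_eqI[of _ "\<lambda>g. g ex" id, OF _ Ggrp.ident] by simp
      ultimately show ?thesis using SS_closed Ggrp.gen_y Ggrp.gen_z by metis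
    qed
  next
    case False
    show ?thesis
    proof (cases "\<bar>c\<bar> \<le> \<bar>b\<bar>")
      case True
      hence b0: "b \<noteq> 0" using False by auto
      have "p*b > 0 \<or> (-p)*b > 0" proof -
        have "p*b \<noteq> 0" using p0 b0 by simp
        moreover have "(-p)*b = -(p*b)" by simp
        ultimately show ?thesis by linarith
      qed
      thus ?thesis
      proof
        assume pb: "p*b > 0"
        have lt: "\<bar>b - p - c\<bar> < \<bar>b\<bar>" using ab[OF less.prems(2) True b0 pb] .
        have "(mm (p+2*c) (b-p-c) c :: 'a mat2) \<in> SS"
          by (rule less.IH[OF _ refl]) (use lt less.prems in \<open>auto simp: algebra_simps power2_eq_square\<close>)
        moreover have "exp_ad zs (mm (p+2*c) (b-p-c) c :: 'a mat2) = mm p b c" unfolding fz by simp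
        ultimately show ?thesis using SS_closed Ggrp.gen_z by metis
      next
        assume pb: "(-p)*b > 0"
        have e: "(-p)^2 + 4*b*c = 1" using less.prems(2) by simp
        have lt: "\<bar>b - (-p) - c\<bar> < \<bar>b\<bar>" using ab[OF e True b0 pb] .
        have "(mm (p-2*c) (b+p-c) c :: 'a mat2) \<in> SS"
          by (rule less.IH[OF _ refl]) (use lt less.prems in \<open>auto simp: algebra_simps power2_eq_square\<close>)
        thus ?thesis using SS_back[OF Ggrp.gen_z, of "mm p b c"] by (simp add: fz)
      qed
    next
      case cb: False
      hence c0: "c \<noteq> 0" by auto
      have cb': "\<bar>b\<bar> \<le> \<bar>c\<bar>" using cb by simp
      have e: "p^2 + 4*c*b = 1" "(-p)^2 + 4*c*b = 1" using less.prems(2) by (simp_all add: algebra_simps)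
      have "p*c > 0 \<or> (-p)*c > 0" proof -
        have "p*c \<noteq> 0" using p0 c0 by simp
        moreover have "(-p)*c = -(p*c)" by simp
        ultimately show ?thesis by linarith
      qed
      thus ?thesis
      proof
        assume pc: "p*c > 0"
        have lt: "\<bar>c - p - b\<bar> < \<bar>c\<bar>" using ab[OF e(1) cb' c0 pc] .
        have "(mm (p+2*b) b (c-p-b) :: 'a mat2) \<in> SS"
          by (rule less.IH[OF _ refl]) (use lt less.prems in \<open>auto simp: algebra_simps power2_eq_square\<close>)
        moreover have "exp_ad ys (mm (p+2*b) b (c-p-b) :: 'a mat2) = mm p b c" unfolding fy by simp
        ultimately show ?thesis using SS_closed Ggrp.gen_y by metis
      next
        assume pc: "(-p)*c > 0"
        have lt: "\<bar>c - (-p) - b\<bar> < \<bar>c\<bar>" using ab[OF e(2) cb' c0 pc] .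
        have "(mm (p-2*b) b (c+p-b) :: 'a mat2) \<in> SS"
          by (rule less.IH[OF _ refl]) (use lt less.prems in \<open>auto simp: algebra_simps power2_eq_square\<close>)
        thus ?thesis using SS_back[OF Ggrp.gen_y, of "mm p b c"] by (simp add: fy)
      qed
    qed
  qed
qed

theorem theorem4p11:
  "(\<lambda>g. g (ex :: 'a::field_char_0 mat2)) ` Ggrp = {u \<in> Lat. trform u u = 2}"
proof
  show "(\<lambda>g. g (ex :: 'a::field_char_0 mat2)) ` Ggrp \<subseteq> {u \<in> Lat. trform u u = 2}"
  proof
    fix v assume "v \<in> (\<lambda>g. g (ex :: 'a::field_char_0 mat2)) ` Ggrp"
    then obtain f where f: "f \<in> Ggrp" "v = f ex" by auto
    obtain a b c d where "a*d - b*c = 1" "f = conjm a b c d" using Ggrp_isconj[OF f(1)] isconj_def by blast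
    thus "v \<in> {u \<in> Lat. trform u u = 2}" using conj_ex f(2) by blast
  qed
next
  show "{u \<in> Lat. trform u u = 2} \<subseteq> (\<lambda>g. g (ex :: 'a::field_char_0 mat2)) ` Ggrp"
  proof
    fix u :: "'a mat2" assume u: "u \<in> {u \<in> Lat. trform u u = 2}"
    then obtain a b c :: int where uu: "u = madd (msmult (of_int a) ex) (madd (msmult (of_int b) ey) (msmult (of_int c) ez))"
      unfolding Lat_def by blast
    have um: "u = mm (a-b-c) b (-c)" unfolding uu by (simp add: mm_def ex_def ey_def ez_def algebra_simps)
    have "(of_int (2*((a-b-c)^2 + 4*b*(-c))) :: 'a) = of_int 2"
      using u unfolding um by (simp add: mm_def trform_def algebra_simps power2_eq_square)
    hence "(a-b-c)^2 + 4*b*(-c) = 1" by (simp only: of_int_eq_iff) simp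
    hence "u \<in> SS" unfolding um using descent by blast
    thus "u \<in> (\<lambda>g. g (ex :: 'a::field_char_0 mat2)) ` Ggrp" unfolding SS_def .
  qed
qed

end
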